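(* Assume $D=D_K$ is prime, let $p>2$ be a prime split in $K$ (equivalently $\chi_K(p)=1$), and let $\pi\in\mathcal O$ with $N(\pi)=p$. Then for all $u,v\in\mathcal D^{-1}$ and all $\sigma\in\Gamma_0(p)$, $$M_{\pi u,\pi v}(\sigma)=M_{u,v}\!\left(\begin{pmatrix}p&0\\0&1\end{pmatrix}\sigma\begin{pmatrix}p^{-1}&0\\0&1\end{pmatrix}\right).$$
   Context: $K$ is an imaginary quadratic field of class number one with discriminant $-D$, ring of integers $\mathcal O$, quadratic character $\chi_K$, $N(a)=a\bar a=|a|^2$, $\mathcal D^{-1}=\mathcal O/\sqrt{-D}$, $e[z]=e^{2\pi iz}$. For $\sigma=\begin{pmatrix}a&b\\ c&d\end{pmatrix}\in\mathrm{SL}_2(\mathbf Z)$ and $u,v\in\mathcal D^{-1}$ define $M_{u,v}(\sigma)=\frac{-i}{c\sqrt D}\sum_{\gamma\in(u+\mathcal O)/c\mathcal O}e\big[\frac{a|\gamma|^2-\gamma\bar v-\bar\gamma v+d|v|^2}{c}\big]$ if $c\ne0$, and $M_{u,v}(\sigma)=\mathrm{sign}(a)\,\delta_{u,av}\,e[ab|u|^2]$ if $c=0$, where $\delta_{u,av}=1$ if $u\equiv av\pmod{\mathcal O}$ and $0$ otherwise. (These are the coefficients in the transformation law $\vartheta_u|[\sigma]_1=\sum_{v\in\mathcal D^{-1}/\mathcal O}M_{u,v}(\sigma)\vartheta_v$ of the theta functions $\vartheta_u(\tau,z,w)=\sum_{a\in u+\mathcal O}e[N(a)\tau+\bar az+aw]$.)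 *)

theory Defs
  imports Complex_Main "HOL-Number_Theory.Number_Theory"
begin

text \<open>Setting: K = Q(sqrt(-D)) with D a prime, D = 3 mod 4, so the discriminant of K is -D,
  embedded in the complex numbers. The ring of integers is O = Z[omega], omega = (1 + i sqrt D)/2.\<close>

definition omegaK :: "nat \<Rightarrow> complex" where
  "omegaK D = (1 + \<i> * complex_of_real (sqrt (real D))) / 2"

definition OK :: "nat \<Rightarrow> complex set" where
  "OK D = {of_int x + of_int y * omegaK D | x y. True}"

text \<open>sqrt(-D) = i sqrt D; inverse different D^{-1} = O / sqrt(-D).\<close>
definition sqrtmD :: "nat \<Rightarrow> complex" where
  "sqrtmD D = \<i> * complex_of_real (sqrt (real D))"

definition Dinv :: "nat \<Rightarrow> complex set" where
  "Dinv D = (\<lambda>z. z / sqrtmD D) ` OK D"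

definition is_OK_ideal :: "nat \<Rightarrow> complex set \<Rightarrow> bool" where
  "is_OK_ideal D I \<longleftrightarrow> I \<subseteq> OK D \<and> 0 \<in> I \<and> (\<forall>x\<in>I. \<forall>y\<in>I. x + y \<in> I)
     \<and> (\<forall>r\<in>OK D. \<forall>x\<in>I. r * x \<in> I)"

definition class_number_one :: "nat \<Rightarrow> bool" where
  "class_number_one D \<longleftrightarrow> (\<forall>I. is_OK_ideal D I \<longrightarrow> (\<exists>a\<in>OK D. I = (\<lambda>x. a * x) ` OK D))"

definition NK :: "complex \<Rightarrow> complex" where
  "NK a = a * cnj a"

definition ee :: "complex \<Rightarrow> complex" where
  "ee z = exp (2 * of_real pi * \<i> * z)"

definition chiK :: "nat \<Rightarrow> nat \<Rightarrow> int" where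
  "chiK D p = Legendre (- int D) (int p)"

text \<open>Matrices sigma = (a b; c d) in SL2(Z) are represented as quadruples (a,b,c,d).\<close>
definition SL2Z :: "(int \<times> int \<times> int \<times> int) set" where
  "SL2Z = {(a,b,c,d). a * d - b * c = 1}"

definition Gamma0 :: "nat \<Rightarrow> (int \<times> int \<times> int \<times> int) set" where
  "Gamma0 N = {(a,b,c,d). (a,b,c,d) \<in> SL2Z \<and> int N dvd c}"

text \<open>(p 0; 0 1) (a b; c d) (p^{-1} 0; 0 1) = (a, p b; c/p, d)  (integral when p divides c).\<close>
definition conj_p :: "nat \<Rightarrow> int \<times> int \<times> int \<times> int \<Rightarrow> int \<times> int \<times> int \<times> int" where
  "conj_p p \<sigma> = (case \<sigma> of (a,b,c,d) \<Rightarrow> (a, int p * b, c div int p, d))"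

text \<open>The coefficients M_{u,v}(sigma). For c nonzero, the sum over (u+O)/cO is taken over the
  representatives u + x + y omega, 0 <= x,y < |c| (the summand is independent of the choice).\<close>
definition Mcoef :: "nat \<Rightarrow> complex \<Rightarrow> complex \<Rightarrow> int \<times> int \<times> int \<times> int \<Rightarrow> complex" where
  "Mcoef D u v \<sigma> = (case \<sigma> of (a,b,c,d) \<Rightarrow>
     if c \<noteq> 0 then
       (- \<i> / (of_int c * complex_of_real (sqrt (real D)))) *
       (\<Sum>(x,y)\<in>{0..<\<bar>c\<bar>} \<times> {0..<\<bar>c\<bar>}.
          (let \<gamma> = u + of_int x + of_int y * omegaK D in
            ee ((of_int a * NK \<gamma> - \<gamma> * cnj v - cnj \<gamma> * v + of_int d * NK v) / of_int c)))
     else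
       of_int (sgn a) * (if u - of_int a * v \<in> OK D then 1 else 0) * ee (of_int (a * b) * NK u))"

end

theory Submission
  imports Defs
begin


lemma sqrtD_sq: "complex_of_real (sqrt (real D)) ^ 2 = of_nat D"
  by (metis of_real_of_nat_eq of_real_power real_sqrt_pow2 of_nat_0_le_iff)

lemma omega_sq:
  assumes "D mod 4 = 3"
  shows "omegaK D ^ 2 = omegaK D - of_int ((int D + 1) div 4)"
proof -
  have k: "of_int ((int D + 1) div 4) * 4 = (of_nat D + 1 :: complex)"
  proof -
    have "(int D + 1) div 4 * 4 = int D + 1" using assms by presburger
    then have "of_int ((int D + 1) div 4 * 4) = (of_int (int D + 1) :: complex)" by simp
    then show ?thesis by simp
  qed
  have "omegaK D ^ 2 = (1 + 2*\<i>*complex_of_real (sqrt (real D)) - of_nat D)/4"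
    unfolding omegaK_def power2_eq_square using sqrtD_sq[of D]
    by (simp add: field_simps power2_eq_square)
  also have "\<dots> = omegaK D - of_int ((int D + 1) div 4)"
    unfolding omegaK_def using k by (simp add: field_simps)
  finally show ?thesis .
qed

lemma cnj_omega: "cnj (omegaK D) = 1 - omegaK D"
  unfolding omegaK_def by (simp add: complex_eq_iff)

lemma Im_coord: "Im (of_int x + of_int y * omegaK D) = of_int y * sqrt (real D) / 2"
  unfolding omegaK_def by simp
lemma Re_coord: "Re (of_int x + of_int y * omegaK D) = of_int x + of_int y / 2"
  unfolding omegaK_def by simp

lemma coord_unique:
  assumes "D > 0" "of_int x + of_int y * omegaK D = (of_int x' + of_int y' * omegaK D :: complex)"
  shows "x = x' \<and> y = y'"
proof -
  have "Im (of_int x + of_int y * omegaK D) = Im (of_int x' + of_int y' * omegaK D)" using assms by simp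
  then have "y = y'" using assms(1) unfolding Im_coord by simp
  moreover have "Re (of_int x + of_int y * omegaK D) = Re (of_int x' + of_int y' * omegaK D)" using assms by simp
  ultimately show ?thesis unfolding Re_coord by simp
qed

lemma OK_iff: "z \<in> OK D \<longleftrightarrow> (\<exists>x y. z = of_int x + of_int y * omegaK D)"
  unfolding OK_def by auto

lemma OK_int[simp]: "of_int n \<in> OK D"
  unfolding OK_iff by (rule exI[of _ n], rule exI[of _ 0]) simp
lemma OK_nat[simp]: "of_nat n \<in> OK D"
  using OK_int[of "int n" D] by simp
lemma OK_0[simp]: "0 \<in> OK D" using OK_int[of 0 D] by simp
lemma OK_1[simp]: "1 \<in> OK D" using OK_int[of 1 D] by simp
lemma OK_omega[simp]: "omegaK D \<in> OK D"
  unfolding OK_iff by (rule exI[of _ 0], rule exI[of _ 1]) simp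

lemma OK_add[intro]: assumes "a \<in> OK D" "b \<in> OK D" shows "a + b \<in> OK D"
proof -
  obtain x y x' y' where a: "a = of_int x + of_int y * omegaK D" and b: "b = of_int x' + of_int y' * omegaK D"
    using assms unfolding OK_iff by blast
  have "a + b = of_int (x+x') + of_int (y+y') * omegaK D" unfolding a b by (simp add: algebra_simps)
  then show ?thesis unfolding OK_iff by blast
qed
lemma OK_uminus[intro]: assumes "a \<in> OK D" shows "- a \<in> OK D"
proof -
  obtain x y where a: "a = of_int x + of_int y * omegaK D" using assms unfolding OK_iff by blast
  have "- a = of_int (-x) + of_int (-y) * omegaK D" unfolding a by (simp add: algebra_simps)
  then show ?thesis unfolding OK_iff by blast
qed
lemma OK_diff[intro]: "a \<in> OK D \<Longrightarrow> b \<in> OK D \<Longrightarrow> a - b \<in> OK D"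
  using OK_add[of a D "-b"] OK_uminus by (simp add: algebra_simps)
lemma OK_mult[intro]: assumes "D mod 4 = 3" "a \<in> OK D" "b \<in> OK D" shows "a * b \<in> OK D"
proof -
  obtain x y x' y' where a: "a = of_int x + of_int y * omegaK D" and b: "b = of_int x' + of_int y' * omegaK D"
    using assms unfolding OK_iff by blast
  define k where "k = (int D + 1) div 4"
  have w: "omegaK D * omegaK D = omegaK D - of_int k" using omega_sq[OF assms(1)] unfolding k_def power2_eq_square .
  have "a * b = of_int (x*x') + of_int (x*y' + y*x') * omegaK D + of_int (y*y') * (omegaK D * omegaK D)"
    unfolding a b by (simp add: algebra_simps)
  also have "\<dots> = of_int (x*x' - y*y'*k) + of_int (x*y' + y*x' + y*y') * omegaK D"
    unfolding w by (simp add: algebra_simps)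
  finally show ?thesis unfolding OK_iff by blast
qed
lemma OK_cnj[intro]: "a \<in> OK D \<Longrightarrow> cnj a \<in> OK D"
  unfolding OK_iff apply clarify
  subgoal for x y by (rule exI[of _ "x+y"], rule exI[of _ "-y"]) (simp add: cnj_omega algebra_simps)
  done

lemma NK_OK: assumes "D mod 4 = 3" "a \<in> OK D" shows "NK a \<in> \<int>"
proof -
  obtain x y where a: "a = of_int x + of_int y * omegaK D" using assms unfolding OK_iff by blast
  define k where "k = (int D + 1) div 4"
  have w: "omegaK D * omegaK D = omegaK D - of_int k" using omega_sq[OF assms(1)] unfolding k_def power2_eq_square .
  have "NK a = of_int (x*x + x*y) + of_int (y*y) * (omegaK D - omegaK D * omegaK D)"
    unfolding NK_def a by (simp add: cnj_omega algebra_simps)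
  also have "\<dots> = of_int (x*x + x*y + k*y*y)" unfolding w by (simp add: algebra_simps)
  finally show ?thesis by simp
qed



lemma sqrtmD_eq: "sqrtmD D = 2 * omegaK D - 1"
  unfolding sqrtmD_def omegaK_def by (simp add: field_simps)
lemma sqrtmD_OK[simp]: "sqrtmD D \<in> OK D"
  unfolding sqrtmD_eq mult_2 by (rule OK_diff[OF OK_add[OF OK_omega OK_omega] OK_1])
lemma sqrtmD_nz: "D > 0 \<Longrightarrow> sqrtmD D \<noteq> 0"
  unfolding sqrtmD_def by simp
lemma cnj_sqrtmD: "cnj (sqrtmD D) = - sqrtmD D"
  unfolding sqrtmD_def by simp
lemma sqrtmD_sq: "sqrtmD D * sqrtmD D = - of_nat D"
proof -
  have "sqrtmD D * sqrtmD D = (\<i> * \<i>) * (complex_of_real (sqrt (real D)))^2"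
    unfolding sqrtmD_def power2_eq_square by (simp only: mult_ac)
  then show ?thesis using sqrtD_sq[of D] by simp
qed

lemma Dinv_iff: "w \<in> Dinv D \<longleftrightarrow> (\<exists>z\<in>OK D. w = z / sqrtmD D)"
  unfolding Dinv_def by auto

lemma Dinv_mult: assumes "D mod 4 = 3" "m \<in> OK D" "w \<in> Dinv D" shows "m * w \<in> Dinv D"
proof -
  obtain z where z: "z \<in> OK D" "w = z / sqrtmD D" using assms unfolding Dinv_iff by blast
  have "m * w = (m*z) / sqrtmD D" using z by simp
  then show ?thesis unfolding Dinv_iff using OK_mult[OF assms(1,2) z(1)] by blast
qed

lemma Dinv_add: assumes "v \<in> Dinv D" "w \<in> Dinv D" shows "v + w \<in> Dinv D"
proof -
  obtain z where z: "z \<in> OK D" "w = z / sqrtmD D" using assms unfolding Dinv_iff by blast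
  obtain y where y: "y \<in> OK D" "v = y / sqrtmD D" using assms unfolding Dinv_iff by blast
  have "v + w = (y + z) / sqrtmD D" using z y by (simp add: add_divide_distrib)
  then show ?thesis unfolding Dinv_iff using OK_add[OF y(1) z(1)] by blast
qed

lemma Dinv_uminus: assumes "w \<in> Dinv D" shows "- w \<in> Dinv D"
proof -
  obtain z where z: "z \<in> OK D" "w = z / sqrtmD D" using assms unfolding Dinv_iff by blast
  have "- w = (- z) / sqrtmD D" using z by simp
  then show ?thesis unfolding Dinv_iff using OK_uminus[OF z(1)] by blast
qed

lemma Dinv_diff: "v \<in> Dinv D \<Longrightarrow> w \<in> Dinv D \<Longrightarrow> v - w \<in> Dinv D"
  using Dinv_add[of v D "-w"] Dinv_uminus[of w D] by simp

lemma OK_Dinv: assumes "D > 0" "z \<in> OK D" "D mod 4 = 3" shows "z \<in> Dinv D"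
proof -
  have "z = (z * sqrtmD D) / sqrtmD D" using sqrtmD_nz[OF assms(1)] by simp
  then show ?thesis unfolding Dinv_iff using OK_mult[OF assms(3,2) sqrtmD_OK] by blast
qed

lemma trace_Dinv:
  assumes "D > 0" "D mod 4 = 3" "w \<in> Dinv D" "l \<in> OK D"
  shows "w * cnj l + cnj w * l \<in> \<int>"
proof -
  obtain z where z: "z \<in> OK D" "w = z / sqrtmD D" using assms unfolding Dinv_iff by blast
  have "z * cnj l \<in> OK D" using OK_mult[OF assms(2) z(1) OK_cnj[OF assms(4)]] .
  then obtain m n where mn: "z * cnj l = of_int m + of_int n * omegaK D" unfolding OK_iff by blast
  have sq: "sqrtmD D \<noteq> 0" using sqrtmD_nz[OF assms(1)] .
  have cw: "cnj w = - cnj z / sqrtmD D" using z by (simp add: cnj_sqrtmD)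
  have "w * cnj l + cnj w * l = (z * cnj l - cnj z * l) / sqrtmD D"
    by (simp add: z(2) cnj_sqrtmD diff_divide_distrib)
  also have "cnj z * l = cnj (z * cnj l)" by simp
  finally have "w * cnj l + cnj w * l = (z * cnj l - cnj (z * cnj l)) / sqrtmD D" .
  also have "z * cnj l - cnj (z * cnj l) = of_int n * sqrtmD D"
    unfolding mn sqrtmD_eq by (simp add: cnj_omega algebra_simps)
  finally show ?thesis using sq by simp
qed

lemma Dinv_times_D: assumes "D mod 4 = 3" "D > 0" "w \<in> Dinv D" shows "of_nat D * w \<in> OK D"
proof -
  obtain z where z: "z \<in> OK D" "w = z / sqrtmD D" using assms unfolding Dinv_iff by blast
  have sq: "sqrtmD D \<noteq> 0" using sqrtmD_nz[OF assms(2)] .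
  have dd: "of_nat D = - (sqrtmD D * sqrtmD D)" using sqrtmD_sq[of D] by simp
  have "of_nat D * w = (- (sqrtmD D * sqrtmD D)) * (z / sqrtmD D)" using dd z(2) by simp
  also have "\<dots> = - (sqrtmD D * z)" using sq by (simp add: divide_simps)
  finally have "of_nat D * w = - (sqrtmD D * z)" .
  then show ?thesis using OK_uminus[OF OK_mult[OF assms(1) sqrtmD_OK z(1)]] by simp
qed

lemma ee_add: "ee (a + b) = ee a * ee b"
  unfolding ee_def by (simp add: distrib_left exp_add)

lemma ee_int: assumes "n \<in> \<int>" shows "ee n = 1"
proof -
  obtain k where k: "n = of_int k" using assms by (auto elim: Ints_cases)
  have "ee n = cis (2 * pi * of_int k)" unfolding ee_def k cis_conv_exp by (simp add: algebra_simps)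
  then show ?thesis by simp
qed

lemma ee_add_int: "n \<in> \<int> \<Longrightarrow> ee (a + n) = ee a"
  by (simp add: ee_add ee_int)

lemma ee_real: "ee (of_real t) = cis (2 * pi * t)"
  unfolding ee_def cis_conv_exp by (simp add: algebra_simps)

lemma ee_geom:
  fixes k :: int and p :: nat
  assumes "p > 0"
  shows "(\<Sum>s<p. ee (of_int k * of_nat s / of_nat p)) = (if int p dvd k then of_nat p else 0)"
proof -
  define x where "x = ee (of_int k / of_nat p)"
  have pow: "ee (of_int k * of_nat s / of_nat p) = x ^ s" for s
  proof -
    have "ee (of_int k * of_nat s / of_nat p) = exp (of_nat s * (2 * of_real pi * \<i> * (of_int k / of_nat p)))"
      unfolding ee_def by (simp add: algebra_simps)
    also have "\<dots> = x ^ s" unfolding x_def ee_def by (rule exp_of_nat_mult)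
    finally show ?thesis .
  qed
  show ?thesis
  proof (cases "int p dvd k")
    case True
    then obtain m where "k = int p * m" by blast
    then have "x = 1" unfolding x_def using assms by (simp add: ee_int)
    then show ?thesis using True by (simp add: pow)
  next
    case False
    have xp: "x ^ p = 1"
    proof -
      have "x ^ p = ee (of_int k * of_nat p / of_nat p)" using pow[of p] by simp
      also have "\<dots> = 1" using assms by (simp add: ee_int)
      finally show ?thesis .
    qed
    have x1: "x \<noteq> 1"
    proof
      assume "x = 1"
      have "x = cis (2 * pi * (of_int k / of_nat p))"
        unfolding x_def using ee_real[of "of_int k / of_nat p"] by simp
      then have "cos (2 * pi * (of_int k / of_nat p)) = 1" using \<open>x = 1\<close>
        by (metis cis.sel(1) one_complex.sel(1))
      then obtain n :: int where n: "2 * pi * (of_int k / of_nat p) = of_int n * 2 * pi"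
        unfolding cos_one_2pi_int by blast
      then have "(2 * pi) * (of_int k / of_nat p) = (2 * pi) * (of_int n :: real)" by (simp add: algebra_simps)
      then have "of_int k / of_nat p = (of_int n :: real)" by (metis mult_cancel_left pi_neq_zero zero_neq_numeral mult_eq_0_iff)
      then have "of_int k = of_int n * (of_nat p :: real)" using assms by (simp add: field_simps)
      then have "k = n * int p" by (metis of_int_eq_iff of_int_mult of_int_of_nat_eq)
      then show False using False by simp
    qed
    show ?thesis using False x1 xp by (simp add: pow geometric_sum)
  qed
qed



lemma NK_mult: "NK (a * b) = NK a * NK b"
  unfolding NK_def by simp

lemma NK_of_int: "NK (of_int r) = of_int (r * r)"
  unfolding NK_def by simp

lemma int_in_piOK:
  fixes p :: nat and r :: int
  assumes "D mod 4 = 3" "prime p" "NK \<pi> = of_nat p" "\<nu> \<in> OK D" "of_int r = \<pi> * \<nu>" "\<bar>r\<bar> < int p"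
  shows "r = 0"
proof -
  obtain m where m: "NK \<nu> = of_int m" using NK_OK[OF assms(1,4)] by (auto elim: Ints_cases)
  have "of_int (r * r) = (of_int (int p * m) :: complex)"
    using NK_mult[of \<pi> \<nu>] assms(3,5) m NK_of_int[of r] by simp
  then have "r * r = int p * m" using of_int_eq_iff by blast
  then have "int p dvd r * r" by simp
  then have "int p dvd r" using assms(2) by (metis prime_dvd_mult_iff prime_nat_int_transfer)
  then show ?thesis using assms(6) by (cases "r = 0") (auto dest: dvd_imp_le_int)
qed

lemma legendre_ndvd:
  assumes "chiK D p = 1" shows "\<not> int p dvd int D"
proof
  assume "int p dvd int D"
  then have "[- int D = 0] (mod int p)" by (simp add: cong_0_iff)
  then have "chiK D p = 0" unfolding chiK_def Legendre_def by simp
  then show False using assms by simp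
qed

lemma trace_int_ndvd:
  fixes p D :: nat and a b k :: int
  assumes "p > 2" "prime p" "\<not> int p dvd int D" "a*a + a*b + k*b*b = int p" "4 * k = int D + 1"
  shows "\<not> int p dvd 2*a+b"
proof
  have "4 * int p = 4*(a*a + a*b) + (4*k)*(b*b)" using assms(4)[symmetric] by (simp add: algebra_simps)
  also have "\<dots> = (2*a+b)*(2*a+b) + int D*(b*b)" unfolding assms(5) by (simp add: algebra_simps)
  finally have eq4: "4 * int p = (2*a+b)*(2*a+b) + int D * (b*b)" .
  assume "int p dvd 2*a+b"
  then obtain t1 where t1: "2*a+b = int p * t1" by blast
  have pp: "prime (int p)" using assms(2) by simp
  have "int D * (b*b) = 4 * int p - (int p * t1) * (int p * t1)" using eq4[unfolded t1] by linarith
  then have "int D * (b*b) = int p * (4 - int p * t1 * t1)" by (simp add: algebra_simps)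
  then have "int p dvd int D * (b*b)" by (rule dvdI)
  then have "int p dvd b" using pp assms(3) by (simp add: prime_dvd_mult_iff)
  then obtain b1 where b1: "b = int p * b1" by blast
  have "4 * int p = (int p * t1) * (int p * t1) + int D * ((int p * b1) * (int p * b1))"
    using eq4[unfolded t1] unfolding b1 .
  then have "int p * 4 = int p * (int p * (t1*t1 + int D * (b1*b1)))" by (simp add: algebra_simps)
  then have "4 = int p * (t1*t1 + int D * (b1*b1))" using assms(1) by (subst (asm) mult_cancel_left) simp
  then have "int p dvd 4" by (rule dvdI)
  then have "p dvd 4" by (metis int_dvd_int_iff of_nat_numeral)
  then have "p dvd 2 * 2" by simp
  then have "p dvd 2" using assms(2) prime_dvd_mult_iff[of p 2 2] by blast
  then have "p \<le> 2" by (simp add: dvd_imp_le)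
  then show False using assms(1) by simp
qed

lemma trace_pi_ndvd:
  fixes p :: nat
  assumes "D mod 4 = 3" "prime p" "p > 2" "\<not> int p dvd int D" "\<pi> \<in> OK D" "NK \<pi> = of_nat p"
  shows "\<exists>t. \<pi> + cnj \<pi> = of_int t \<and> \<not> int p dvd t"
proof -
  obtain a b where ab: "\<pi> = of_int a + of_int b * omegaK D" using assms(5) unfolding OK_iff by blast
  define k where "k = (int D + 1) div 4"
  have k4: "4 * k = int D + 1" unfolding k_def using assms(1) by presburger
  have w: "omegaK D * omegaK D = omegaK D - of_int k" using omega_sq[OF assms(1)] unfolding k_def power2_eq_square .
  have tr: "\<pi> + cnj \<pi> = of_int (2*a + b)" unfolding ab by (simp add: cnj_omega algebra_simps)
  have "NK \<pi> = of_int (a*a + a*b) + of_int (b*b) * (omegaK D - omegaK D * omegaK D)"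
    unfolding NK_def ab by (simp add: cnj_omega algebra_simps)
  also have "\<dots> = of_int (a*a + a*b + k*b*b)" unfolding w by (simp add: algebra_simps)
  finally have "of_int (a*a + a*b + k*b*b) = (of_int (int p) :: complex)" using assms(6) by simp
  then have np: "a*a + a*b + k*b*b = int p" using of_int_eq_iff by blast
  show ?thesis using tr trace_int_ndvd[OF assms(3,2,4) np k4] by blast
qed



lemma periodic_sum:
  fixes q :: "complex \<Rightarrow> complex" and N :: int and \<phi> :: "'a \<Rightarrow> complex"
  assumes N: "N > 0" and fin: "finite S" and card: "card S = nat N * nat N"
    and per: "\<And>z l. z \<in> OK D \<Longrightarrow> l \<in> OK D \<Longrightarrow> q (z + of_int N * l) = q z"
    and phiOK: "\<And>s. s \<in> S \<Longrightarrow> \<phi> s \<in> OK D"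
    and inj: "\<And>s s' l. s \<in> S \<Longrightarrow> s' \<in> S \<Longrightarrow> l \<in> OK D \<Longrightarrow> \<phi> s - \<phi> s' = of_int N * l \<Longrightarrow> s = s'"
  shows "(\<Sum>(x,y)\<in>{0..<N}\<times>{0..<N}. q (of_int x + of_int y * omegaK D)) = (\<Sum>s\<in>S. q (\<phi> s))"
proof -
  define cx where "cx z = (SOME xy. z = of_int (fst xy) + of_int (snd xy) * omegaK D)" for z
  have cxp: "z = of_int (fst (cx z)) + of_int (snd (cx z)) * omegaK D" if "z \<in> OK D" for z
  proof -
    from that obtain x y where "z = of_int x + of_int y * omegaK D" unfolding OK_iff by blast
    then have "\<exists>xy. z = of_int (fst xy) + of_int (snd xy) * omegaK D" by (intro exI[of _ "(x,y)"]) simp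
    then show ?thesis unfolding cx_def by (rule someI_ex)
  qed
  define g where "g s = (fst (cx (\<phi> s)) mod N, snd (cx (\<phi> s)) mod N)" for s
  define h where "h s = of_int (fst (cx (\<phi> s)) div N) + of_int (snd (cx (\<phi> s)) div N) * omegaK D" for s
  have hOK: "h s \<in> OK D" for s unfolding h_def OK_iff by blast
  have alg: "X = X1 + n*X2 \<Longrightarrow> Y = Y1 + n*Y2 \<Longrightarrow> X + Y*w = (X1 + Y1*w) + n*(X2 + Y2*w)"
    for X X1 X2 Y Y1 Y2 n w :: complex by (simp add: algebra_simps)
  have md: "(of_int x::complex) = of_int (x mod N) + of_int N * of_int (x div N)" for x
    by (metis mod_mult_div_eq of_int_add of_int_mult)
  have gz: "\<phi> s = (of_int (fst (g s)) + of_int (snd (g s)) * omegaK D) + of_int N * h s" if "s \<in> S" for s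
  proof -
    have "\<phi> s = of_int (fst (cx (\<phi> s))) + of_int (snd (cx (\<phi> s))) * omegaK D" using cxp phiOK that by blast
    also have "\<dots> = (of_int (fst (g s)) + of_int (snd (g s)) * omegaK D) + of_int N * h s"
      unfolding g_def h_def fst_conv snd_conv by (rule alg[OF md md])
    finally show ?thesis .
  qed
  define R where "R = {0..<N}\<times>{0..<N}"
  have injg: "inj_on g S"
  proof (rule inj_onI)
    fix s s' assume s: "s \<in> S" "s' \<in> S" "g s = g s'"
    have "\<phi> s - \<phi> s' = of_int N * (h s - h s')"
      using gz[OF s(1)] gz[OF s(2)] s(3) by (simp add: algebra_simps)
    then show "s = s'" using inj[OF s(1,2) OK_diff[OF hOK hOK]] by blast
  qed
  have sub: "g ` S \<subseteq> R" unfolding R_def g_def using N by auto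
  have cR: "card R = nat N * nat N" unfolding R_def by (simp add: card_cartesian_product)
  have "g ` S = R"
    using card_subset_eq[OF _ sub] cR card card_image[OF injg] unfolding R_def by auto
  then have bij: "bij_betw g S R" using injg unfolding bij_betw_def by blast
  define F where "F = (\<lambda>(x,y). q (of_int x + of_int y * omegaK D))"
  have "(\<Sum>(x,y)\<in>R. q (of_int x + of_int y * omegaK D)) = (\<Sum>s\<in>S. F (g s))"
    unfolding F_def[symmetric] by (rule sum.reindex_bij_betw[OF bij, symmetric])
  also have "\<dots> = (\<Sum>s\<in>S. q (\<phi> s))"
  proof (rule sum.cong[OF refl])
    fix s assume s: "s \<in> S"
    have "F (g s) = q (of_int (fst (g s)) + of_int (snd (g s)) * omegaK D)"
      unfolding F_def by (simp add: case_prod_beta)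
    also have "\<dots> = q ((of_int (fst (g s)) + of_int (snd (g s)) * omegaK D) + of_int N * h s)"
      by (rule per[symmetric]) (auto simp: OK_iff intro: hOK[unfolded OK_iff])
    also have "\<dots> = q (\<phi> s)" using gz[OF s] by simp
    finally show "F (g s) = q (\<phi> s)" .
  qed
  finally show ?thesis unfolding R_def .
qed



lemma Q_per:
  fixes a c d :: int and P w l :: complex
  assumes "c \<noteq> 0"
  shows "(of_int a * NK (w + of_int c * l) - (w + of_int c * l) * cnj P - cnj (w + of_int c * l) * P + of_int d * NK P) / of_int c
       = (of_int a * NK w - w * cnj P - cnj w * P + of_int d * NK P) / of_int c
         + (of_int a * (w * cnj l + cnj w * l) + of_int a * of_int c * NK l - (P * cnj l + cnj P * l))"
  using assms unfolding NK_def by (simp add: field_simps)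

lemma ER_eq:
  fixes a c' d :: int and p :: nat and \<pi> v g :: complex
  assumes "\<pi> * cnj \<pi> = of_nat p" "p \<noteq> 0"
  shows "(of_int a * NK g - g * cnj v - cnj g * v + of_int d * NK v) / of_int c'
     = (of_int a * NK (\<pi> * g) - (\<pi> * g) * cnj (\<pi> * v) - cnj (\<pi> * g) * (\<pi> * v) + of_int d * NK (\<pi> * v)) / (of_nat p * of_int c')"
proof -
  have e: "of_int a * NK (\<pi> * g) - (\<pi> * g) * cnj (\<pi> * v) - cnj (\<pi> * g) * (\<pi> * v) + of_int d * NK (\<pi> * v)
     = (\<pi> * cnj \<pi>) * (of_int a * NK g - g * cnj v - cnj g * v + of_int d * NK v)"
    unfolding NK_def by (simp add: algebra_simps)
  show ?thesis unfolding e assms(1) using assms(2) by simp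
qed

lemma Q_shift:
  fixes a c' d :: int and p r s :: nat and \<pi> v g :: complex
  assumes "\<pi> * cnj \<pi> = of_nat p" "p \<noteq> 0" "c' \<noteq> 0"
  defines "Q \<equiv> (\<lambda>z. (of_int a * NK z - z * cnj (\<pi> * v) - cnj z * (\<pi> * v) + of_int d * NK (\<pi> * v)) / of_int (int p * c'))"
  shows "Q (\<pi> * g + of_nat r + of_int c' * \<pi> * of_nat s)
     = Q (\<pi> * g + of_nat r) + of_int a * of_nat r * (\<pi> + cnj \<pi>) * of_nat s / of_nat p
       + (of_int a * of_nat s * (g + cnj g) + of_int a * of_int c' * of_nat s * of_nat s - of_nat s * (v + cnj v))"
proof -
  define W where "W = \<pi> * g + of_nat r"
  define X where "X = of_int c' * \<pi> * of_nat s"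
  have Qa: "Q z = (of_int a * NK z - (z * cnj (\<pi> * v) + cnj z * (\<pi> * v)) + of_int d * NK (\<pi> * v)) / (of_nat p * of_int c')" for z
    unfolding Q_def by (simp add: algebra_simps)
  have n1: "NK (W + X) = NK W
     + of_int c' * of_nat s * (of_nat p * (g + cnj g) + of_nat r * (\<pi> + cnj \<pi>)) + of_int c' * of_int c' * of_nat s * of_nat s * of_nat p"
    unfolding NK_def W_def X_def assms(1)[symmetric] by (simp add: algebra_simps)
  have n2: "(W + X) * cnj (\<pi> * v) + cnj (W + X) * (\<pi> * v) = (W * cnj (\<pi> * v) + cnj W * (\<pi> * v)) + of_int c' * of_nat s * of_nat p * (v + cnj v)"
    unfolding X_def assms(1)[symmetric] by (simp add: algebra_simps)
  have "Q (W + X) = Q W + of_int a * of_nat r * (\<pi> + cnj \<pi>) * of_nat s / of_nat p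
       + (of_int a * of_nat s * (g + cnj g) + of_int a * of_int c' * of_nat s * of_nat s - of_nat s * (v + cnj v))"
    unfolding Qa n1 n2 using assms(2,3) by (simp add: field_simps)
  then show ?thesis unfolding W_def X_def by (simp add: add.assoc)
qed



lemma piw_OK:
  fixes p :: nat
  assumes "D mod 4 = 3" "D > 0" "\<not> int p dvd int D" "prime p" "NK \<pi> = of_nat p"
    "w \<in> Dinv D" "\<pi> * w \<in> OK D" "\<pi> \<in> OK D"
  shows "w \<in> OK D"
proof -
  have pw: "of_nat p * w \<in> OK D"
  proof -
    have e: "of_nat p * w = cnj \<pi> * (\<pi> * w)" using assms(5) unfolding NK_def by (simp add: algebra_simps)
    show ?thesis unfolding e by (rule OK_mult[OF assms(1) OK_cnj[OF assms(8)] assms(7)])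
  qed
  have dw: "of_nat D * w \<in> OK D" using Dinv_times_D[OF assms(1,2,6)] .
  have "coprime (int p) (int D)" using prime_imp_coprime[of "int p" "int D"] assms(3,4) by simp
  then obtain x y where xy: "x * int p + y * int D = 1" using bezout_int[of "int p" "int D"] by auto
  have e: "w = of_int x * (of_nat p * w) + of_int y * (of_nat D * w)"
  proof -
    have "(of_int (x * int p + y * int D) :: complex) = 1" using xy by simp
    then have "of_int x * of_nat p + of_int y * of_nat D = (1::complex)" by simp
    then show ?thesis by (metis (no_types, lifting) distrib_right mult.assoc mult_1 )
  qed
  show ?thesis by (subst e) (rule OK_add[OF OK_mult[OF assms(1) OK_int pw] OK_mult[OF assms(1) OK_int dw]])
qed



lemma inner_sum:
  fixes a c' d t :: int and p :: nat and \<pi> v g :: complex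
  assumes pp: "\<pi> * cnj \<pi> = of_nat p" and pr: "prime p" and c0: "c' \<noteq> 0" and na: "\<not> int p dvd a"
    and tt: "\<pi> + cnj \<pi> = of_int t" and nt: "\<not> int p dvd t"
    and gi: "g + cnj g \<in> \<int>" and vi: "v + cnj v \<in> \<int>"
  shows "(\<Sum>r<p. \<Sum>s<p. ee ((of_int a * NK (\<pi> * g + of_nat r + of_int c' * \<pi> * of_nat s)
            - (\<pi> * g + of_nat r + of_int c' * \<pi> * of_nat s) * cnj (\<pi> * v)
            - cnj (\<pi> * g + of_nat r + of_int c' * \<pi> * of_nat s) * (\<pi> * v) + of_int d * NK (\<pi> * v)) / of_int (int p * c')))
       = of_nat p * ee ((of_int a * NK (\<pi> * g) - (\<pi> * g) * cnj (\<pi> * v) - cnj (\<pi> * g) * (\<pi> * v) + of_int d * NK (\<pi> * v)) / of_int (int p * c'))"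
proof -
  define Q where "Q = (\<lambda>z. (of_int a * NK z - z * cnj (\<pi> * v) - cnj z * (\<pi> * v) + of_int d * NK (\<pi> * v)) / of_int (int p * c'))"
  have p0: "p \<noteq> 0" using pr by auto
  have step: "ee (Q (\<pi> * g + of_nat r + of_int c' * \<pi> * of_nat s))
      = ee (Q (\<pi> * g + of_nat r)) * ee (of_int (a * int r * t) * of_nat s / of_nat p)" for r s
  proof -
    have e: "Q (\<pi> * g + of_nat r + of_int c' * \<pi> * of_nat s)
     = Q (\<pi> * g + of_nat r) + of_int a * of_nat r * (\<pi> + cnj \<pi>) * of_nat s / of_nat p
       + (of_int a * of_nat s * (g + cnj g) + of_int a * of_int c' * of_nat s * of_nat s - of_nat s * (v + cnj v))"
      unfolding Q_def by (rule Q_shift[OF pp p0 c0])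
    have J: "of_int a * of_nat s * (g + cnj g) + of_int a * of_int c' * of_nat s * of_nat s - of_nat s * (v + cnj v) \<in> \<int>"
    proof -
      obtain G where G: "g + cnj g = of_int G" using gi by (auto elim: Ints_cases)
      obtain V where V: "v + cnj v = of_int V" using vi by (auto elim: Ints_cases)
      have "of_int a * of_nat s * (g + cnj g) + of_int a * of_int c' * of_nat s * of_nat s - of_nat s * (v + cnj v)
          = (of_int (a * int s * G + a * c' * int s * int s - int s * V) :: complex)" unfolding G V by simp
      then show ?thesis by (metis Ints_of_int)
    qed
    have x: "of_int a * of_nat r * (\<pi> + cnj \<pi>) * of_nat s / of_nat p = of_int (a * int r * t) * of_nat s / (of_nat p :: complex)"
      unfolding tt by simp
    have "ee (Q (\<pi> * g + of_nat r + of_int c' * \<pi> * of_nat s))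
      = ee (Q (\<pi> * g + of_nat r) + of_int a * of_nat r * (\<pi> + cnj \<pi>) * of_nat s / of_nat p)"
      unfolding e by (rule ee_add_int[OF J])
    then show ?thesis unfolding x ee_add .
  qed
  have dv: "int p dvd a * int r * t \<longleftrightarrow> r = 0" if "r < p" for r
  proof
    assume h: "int p dvd a * int r * t"
    have pi: "prime (int p)" using pr by simp
    from h have "int p dvd int r" using na nt pi by (simp add: prime_dvd_mult_iff)
    then have "p dvd r" by simp
    then show "r = 0" using that by (metis dvd_imp_le not_le neq0_conv)
  qed simp
  have "(\<Sum>r<p. \<Sum>s<p. ee (Q (\<pi> * g + of_nat r + of_int c' * \<pi> * of_nat s)))
      = (\<Sum>r<p. ee (Q (\<pi> * g + of_nat r)) * (\<Sum>s<p. ee (of_int (a * int r * t) * of_nat s / of_nat p)))"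
    by (simp add: step sum_distrib_left)
  also have "\<dots> = (\<Sum>r<p. if r = 0 then ee (Q (\<pi> * g + of_nat r)) * of_nat p else 0)"
  proof (rule sum.cong[OF refl])
    fix r assume "r \<in> {..<p}"
    then have rp: "r < p" by simp
    have "(\<Sum>s<p. ee (of_int (a * int r * t) * of_nat s / of_nat p)) = (if int p dvd a * int r * t then of_nat p else 0)"
      by (rule ee_geom) (use p0 in simp)
    then show "ee (Q (\<pi> * g + of_nat r)) * (\<Sum>s<p. ee (of_int (a * int r * t) * of_nat s / of_nat p))
        = (if r = 0 then ee (Q (\<pi> * g + of_nat r)) * of_nat p else 0)"
      using dv[OF rp] by simp
  qed
  also have "\<dots> = of_nat p * ee (Q (\<pi> * g))" using p0 by (simp add: sum.delta)
  finally show ?thesis unfolding Q_def .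
qed


lemma small_mult_zero: fixes k n :: int assumes "\<bar>k * n\<bar> < \<bar>k\<bar>" shows "n = 0"
proof (rule ccontr)
  assume "n \<noteq> 0"
  then have "1 \<le> \<bar>n\<bar>" by simp
  then have "\<bar>k\<bar> * 1 \<le> \<bar>k\<bar> * \<bar>n\<bar>" by (rule mult_left_mono) simp
  then show False using assms by (simp add: abs_mult)
qed

lemma phi_inj:
  fixes p r r' s s' :: nat and c' i i' j j' :: int
  assumes D3: "D mod 4 = 3" and D0: "D > 0" and pr: "prime p" and np: "NK \<pi> = of_nat p" and piO: "\<pi> \<in> OK D"
    and c0: "c' \<noteq> 0" and bi: "0 \<le> i" "i < \<bar>c'\<bar>" "0 \<le> i'" "i' < \<bar>c'\<bar>"
    and bj: "0 \<le> j" "j < \<bar>c'\<bar>" "0 \<le> j'" "j' < \<bar>c'\<bar>"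
    and br: "r < p" "r' < p" and bs: "s < p" "s' < p" and l2: "l2 \<in> OK D"
    and eq: "\<pi> * (of_int i + of_int j * omegaK D) + of_nat r + of_int c' * \<pi> * of_nat s
       - (\<pi> * (of_int i' + of_int j' * omegaK D) + of_nat r' + of_int c' * \<pi> * of_nat s')
       = of_nat p * of_int c' * l2"
  shows "i = i' \<and> j = j' \<and> r = r' \<and> s = s'"
proof -
  have pp: "\<pi> * cnj \<pi> = of_nat p" using np unfolding NK_def .
  have pi0: "\<pi> \<noteq> 0" using pp pr by (auto simp: prime_gt_0_nat)
  define di where "di = i - i'"
  define dj where "dj = j - j'"
  define dr where "dr = int r - int r'"
  define ds where "ds = int s - int s'"
  define X where "X = of_int di + of_int dj * omegaK D"
  have XO: "X \<in> OK D" unfolding X_def OK_iff by blast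
  have eq2: "\<pi> * X + of_int dr + of_int c' * \<pi> * of_int ds = of_nat p * of_int c' * l2"
    using eq unfolding X_def di_def dj_def dr_def ds_def by (simp add: algebra_simps)
  have "of_int dr = of_nat p * of_int c' * l2 - \<pi> * X - of_int c' * \<pi> * of_int ds"
    using eq2 by (simp add: algebra_simps)
  also have "\<dots> = \<pi> * (cnj \<pi> * of_int c' * l2 - X - of_int c' * of_int ds)"
    unfolding pp[symmetric] by (simp add: algebra_simps)
  finally have drpi: "of_int dr = \<pi> * (cnj \<pi> * of_int c' * l2 - X - of_int c' * of_int ds)" .
  have nuO: "cnj \<pi> * of_int c' * l2 - X - of_int c' * of_int ds \<in> OK D"
    using OK_diff[OF OK_diff[OF OK_mult[OF D3 OK_mult[OF D3 OK_cnj[OF piO] OK_int] l2] XO] OK_mult[OF D3 OK_int OK_int]] .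
  have "\<bar>dr\<bar> < int p" unfolding dr_def using br by simp
  then have dr0: "dr = 0" using int_in_piOK[OF D3 pr np nuO drpi] by simp
  have "\<pi> * (X + of_int c' * of_int ds) = \<pi> * (of_int c' * (cnj \<pi> * l2))"
    using eq2 dr0 unfolding pp[symmetric] by (simp add: algebra_simps)
  then have eq3: "X + of_int c' * of_int ds = of_int c' * (cnj \<pi> * l2)" using pi0 by simp
  obtain m n where mn: "cnj \<pi> * l2 = of_int m + of_int n * omegaK D"
    using OK_mult[OF D3 OK_cnj[OF piO] l2] unfolding OK_iff by blast
  have "of_int (di + c' * ds) + of_int dj * omegaK D = of_int (c' * m) + of_int (c' * n) * omegaK D"
    using eq3 unfolding X_def mn by (simp add: algebra_simps)
  then have co: "di + c' * ds = c' * m" "dj = c' * n" using coord_unique[OF D0] by blast+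
  have "\<bar>c' * n\<bar> < \<bar>c'\<bar>" using co(2) bj unfolding dj_def by simp
  then have "n = 0" by (rule small_mult_zero)
  then have dj0: "dj = 0" using co(2) by simp
  have "di = c' * (m - ds)" using co(1) by (simp add: algebra_simps)
  moreover have "\<bar>di\<bar> < \<bar>c'\<bar>" using bi unfolding di_def by simp
  ultimately have "\<bar>c' * (m - ds)\<bar> < \<bar>c'\<bar>" by simp
  then have "m - ds = 0" by (rule small_mult_zero)
  then have di0: "di = 0" using co(1) by simp
  have "of_int c' * of_int ds = of_int c' * (cnj \<pi> * l2)" using eq3 unfolding X_def di0 dj0 by simp
  then have "of_int ds = cnj \<pi> * l2" using c0 by simp
  then have "cnj (of_int ds) = cnj (cnj \<pi> * l2)" by simp
  then have dspi: "of_int ds = \<pi> * cnj l2" by simp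
  have "\<bar>ds\<bar> < int p" unfolding ds_def using bs by simp
  then have ds0: "ds = 0" using int_in_piOK[OF D3 pr np OK_cnj[OF l2] dspi] by simp
  show ?thesis using di0 dj0 dr0 ds0 unfolding di_def dj_def dr_def ds_def by simp
qed

theorem proposition3p6:
  fixes D p :: nat and \<pi> u v :: complex and \<sigma> :: "int \<times> int \<times> int \<times> int"
  assumes "prime D" and "D mod 4 = 3" and "class_number_one D"
    and "prime p" and "p > 2" and "chiK D p = 1"
    and "\<pi> \<in> OK D" and "NK \<pi> = of_nat p"
    and "u \<in> Dinv D" and "v \<in> Dinv D"
    and "\<sigma> \<in> Gamma0 p"
  shows "Mcoef D (\<pi> * u) (\<pi> * v) \<sigma> = Mcoef D u v (conj_p p \<sigma>)"
proof -
  note D3 = assms(2)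
  obtain a b c d where sig: "\<sigma> = (a,b,c,d)" by (cases \<sigma>) auto
  from assms(11) have det: "a*d - b*c = 1" and pc: "int p dvd c"
    unfolding Gamma0_def SL2Z_def sig by auto
  have D0: "D > 0" using assms(1) prime_gt_0_nat by blast
  have p0: "p \<noteq> 0" using assms(5) by simp
  have nd: "\<not> int p dvd int D" using legendre_ndvd[OF assms(6)] .
  have pp: "\<pi> * cnj \<pi> = of_nat p" using assms(8) unfolding NK_def .
  have piu: "\<pi> * u \<in> Dinv D" using Dinv_mult[OF D3 assms(7,9)] .
  have piv: "\<pi> * v \<in> Dinv D" using Dinv_mult[OF D3 assms(7,10)] .
  show ?thesis
  proof (cases "c = 0")
    case True
    have cp: "conj_p p \<sigma> = (a, int p * b, 0, d)" unfolding conj_p_def sig True by simp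
    define w where "w = u - of_int a * v"
    have wD: "w \<in> Dinv D" unfolding w_def using Dinv_diff[OF assms(9) Dinv_mult[OF D3 OK_int assms(10)]] .
    have e: "\<pi> * u - of_int a * (\<pi> * v) = \<pi> * w" unfolding w_def by (simp add: algebra_simps)
    have mem: "(\<pi> * u - of_int a * (\<pi> * v) \<in> OK D) = (u - of_int a * v \<in> OK D)"
      unfolding e w_def[symmetric]
      using piw_OK[OF D3 D0 nd assms(4,8) wD _ assms(7)] OK_mult[OF D3 assms(7)] by blast
    have nk: "NK (\<pi> * u) = of_nat p * NK u" using NK_mult[of \<pi> u] assms(8) by simp
    have ee_eq: "ee (of_int (a * b) * NK (\<pi> * u)) = ee (of_int (a * (int p * b)) * NK u)"
      unfolding nk by (simp add: algebra_simps)
    show ?thesis unfolding cp unfolding sig Mcoef_def using True mem ee_eq by simp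
  next
    case False
    define c' where "c' = c div int p"
    have cc: "c = int p * c'" using pc unfolding c'_def by simp
    have c'0: "c' \<noteq> 0" using False cc by simp
    have cp: "conj_p p \<sigma> = (a, int p * b, c', d)" unfolding conj_p_def sig c'_def by simp
    define Q where "Q = (\<lambda>z. (of_int a * NK z - z * cnj (\<pi> * v) - cnj z * (\<pi> * v) + of_int d * NK (\<pi> * v)) / of_int c)"
    define q where "q = (\<lambda>z. ee (Q (\<pi> * u + z)))"
    have L: "Mcoef D (\<pi> * u) (\<pi> * v) \<sigma> = (- \<i> / (of_int c * complex_of_real (sqrt (real D))))
        * (\<Sum>(x,y)\<in>{0..<\<bar>c\<bar>} \<times> {0..<\<bar>c\<bar>}. q (of_int x + of_int y * omegaK D))"
      unfolding Mcoef_def sig q_def Q_def using False by (simp add: add.assoc Let_def)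
    have R: "Mcoef D u v (conj_p p \<sigma>) = (- \<i> / (of_int c' * complex_of_real (sqrt (real D))))
        * (\<Sum>(x,y)\<in>{0..<\<bar>c'\<bar>} \<times> {0..<\<bar>c'\<bar>}. ee (Q (\<pi> * (u + of_int x + of_int y * omegaK D))))"
      unfolding Mcoef_def cp Q_def cc using c'0 ER_eq[OF pp p0] by (simp add: Let_def)
    have Nc: "\<bar>c\<bar> > 0" using False by simp
    have absc: "of_int \<bar>c\<bar> = (of_int c * of_int (sgn c) :: complex)"
      by (metis abs_mult_sgn abs_sgn of_int_mult sgn_mult_abs mult.commute)
    have per: "q (z + of_int \<bar>c\<bar> * l) = q z" if z: "z \<in> OK D" and l: "l \<in> OK D" for z l
    proof -
      define l' where "l' = of_int (sgn c) * l"
      have l'O: "l' \<in> OK D" unfolding l'_def using OK_mult[OF D3 OK_int l] .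
      have cl: "of_int \<bar>c\<bar> * l = of_int c * l'" unfolding l'_def absc by simp
      define w where "w = \<pi> * u + z"
      have wD: "w \<in> Dinv D" unfolding w_def using Dinv_add[OF piu OK_Dinv[OF D0 z D3]] .
      have e: "Q (w + of_int c * l') = Q w + (of_int a * (w * cnj l' + cnj w * l') + of_int a * of_int c * NK l'
          - ((\<pi> * v) * cnj l' + cnj (\<pi> * v) * l'))"
        unfolding Q_def by (rule Q_per[OF False])
      have J: "of_int a * (w * cnj l' + cnj w * l') + of_int a * of_int c * NK l'
          - ((\<pi> * v) * cnj l' + cnj (\<pi> * v) * l') \<in> \<int>"
        by (rule Ints_diff[OF Ints_add[OF Ints_mult[OF Ints_of_int trace_Dinv[OF D0 D3 wD l'O]]
              Ints_mult[OF Ints_mult[OF Ints_of_int Ints_of_int] NK_OK[OF D3 l'O]]] trace_Dinv[OF D0 D3 piv l'O]])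
      have "q (z + of_int \<bar>c\<bar> * l) = ee (Q (w + of_int c * l'))"
        unfolding q_def cl w_def by (simp add: add.assoc)
      also have "\<dots> = ee (Q w)" unfolding e by (rule ee_add_int[OF J])
      also have "\<dots> = q z" unfolding q_def w_def ..
      finally show ?thesis .
    qed
    define A where "A = {0..<\<bar>c'\<bar>} \<times> {0..<\<bar>c'\<bar>}"
    define B where "B = {0..<p} \<times> {0..<p}"
    define S where "S = A \<times> B"
    define \<phi> where "\<phi> = (\<lambda>((i,j),(r,s)). \<pi> * (of_int i + of_int j * omegaK D) + of_nat r + of_int c' * \<pi> * of_nat s)"
    have finS: "finite S" unfolding S_def A_def B_def by simp
    have cardS: "card S = nat \<bar>c\<bar> * nat \<bar>c\<bar>"
    proof -
      have "card S = nat \<bar>c'\<bar> * nat \<bar>c'\<bar> * (p * p)" unfolding S_def A_def B_def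
        by (simp add: card_cartesian_product)
      moreover have "nat \<bar>c\<bar> = p * nat \<bar>c'\<bar>" unfolding cc by (simp add: abs_mult nat_mult_distrib)
      ultimately show ?thesis by simp
    qed
    have phiOK: "\<phi> x \<in> OK D" for x
    proof -
      obtain i j r s where x: "x = ((i,j),(r,s))" by (cases x) auto
      have "of_int i + of_int j * omegaK D \<in> OK D" unfolding OK_iff by blast
      then show ?thesis unfolding x \<phi>_def
        using OK_add[OF OK_add[OF OK_mult[OF D3 assms(7)] OK_nat] OK_mult[OF D3 OK_mult[OF D3 OK_int assms(7)] OK_nat]]
        by simp
    qed
    have inj: "x = x'" if x: "x \<in> S" "x' \<in> S" and l: "l \<in> OK D" and eq: "\<phi> x - \<phi> x' = of_int \<bar>c\<bar> * l" for x x' l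
    proof -
      obtain i j r s where xe: "x = ((i,j),(r,s))" by (cases x) auto
      obtain i' j' r' s' where xe': "x' = ((i',j'),(r',s'))" by (cases x') auto
      define l2 where "l2 = of_int (sgn c) * l"
      have l2O: "l2 \<in> OK D" unfolding l2_def using OK_mult[OF D3 OK_int l] .
      have "of_int \<bar>c\<bar> * l = of_nat p * of_int c' * l2" unfolding l2_def absc by (simp add: cc algebra_simps)
      then have eq': "\<pi> * (of_int i + of_int j * omegaK D) + of_nat r + of_int c' * \<pi> * of_nat s
       - (\<pi> * (of_int i' + of_int j' * omegaK D) + of_nat r' + of_int c' * \<pi> * of_nat s')
       = of_nat p * of_int c' * l2" using eq unfolding xe xe' \<phi>_def by simp
      from x have bnds: "0 \<le> i" "i < \<bar>c'\<bar>" "0 \<le> i'" "i' < \<bar>c'\<bar>" "0 \<le> j" "j < \<bar>c'\<bar>" "0 \<le> j'" "j' < \<bar>c'\<bar>"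
        "r < p" "r' < p" "s < p" "s' < p"
        unfolding xe xe' S_def A_def B_def by auto
      show ?thesis using phi_inj[OF D3 D0 assms(4,8,7) c'0 bnds(1-4) bnds(5-8) bnds(9,10) bnds(11,12) l2O eq']
        unfolding xe xe' by simp
    qed
    have step1: "(\<Sum>(x,y)\<in>{0..<\<bar>c\<bar>} \<times> {0..<\<bar>c\<bar>}. q (of_int x + of_int y * omegaK D)) = (\<Sum>x\<in>S. q (\<phi> x))"
      by (rule periodic_sum[OF Nc finS cardS per phiOK inj])
    obtain t where tt: "\<pi> + cnj \<pi> = of_int t" and nt: "\<not> int p dvd t"
      using trace_pi_ndvd[OF D3 assms(4,5) nd assms(7,8)] by blast
    have na: "\<not> int p dvd a"
    proof
      assume "int p dvd a"
      then have "int p dvd a*d - b*c" using pc by simp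
      then have "int p dvd 1" using det by simp
      then show False using assms(5) by simp
    qed
    have vi: "v + cnj v \<in> \<int>" using trace_Dinv[OF D0 D3 assms(10) OK_1] by simp
    have step2: "(\<Sum>x\<in>S. q (\<phi> x)) = of_nat p * (\<Sum>(x,y)\<in>A. ee (Q (\<pi> * (u + of_int x + of_int y * omegaK D))))"
    proof -
      have "(\<Sum>x\<in>S. q (\<phi> x)) = (\<Sum>(i,j)\<in>A. \<Sum>(r,s)\<in>B. q (\<phi> ((i,j),(r,s))))"
        unfolding S_def by (simp add: sum.cartesian_product case_prod_beta)
      also have "\<dots> = (\<Sum>(i,j)\<in>A. of_nat p * ee (Q (\<pi> * (u + of_int i + of_int j * omegaK D))))"
      proof (rule sum.cong[OF refl], clarify)
        fix i j assume "(i,j) \<in> A"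
        define g where "g = u + of_int i + of_int j * omegaK D"
        have gD: "g \<in> Dinv D" unfolding g_def
          using Dinv_add[OF Dinv_add[OF assms(9) OK_Dinv[OF D0 OK_int D3]] OK_Dinv[OF D0 OK_mult[OF D3 OK_int OK_omega] D3]] .
        have gi: "g + cnj g \<in> \<int>" using trace_Dinv[OF D0 D3 gD OK_1] by simp
        have qphi: "q (\<phi> ((i,j),(r,s))) = ee ((of_int a * NK (\<pi> * g + of_nat r + of_int c' * \<pi> * of_nat s)
            - (\<pi> * g + of_nat r + of_int c' * \<pi> * of_nat s) * cnj (\<pi> * v)
            - cnj (\<pi> * g + of_nat r + of_int c' * \<pi> * of_nat s) * (\<pi> * v) + of_int d * NK (\<pi> * v)) / of_int (int p * c'))"
          for r s
        proof -
          have "\<pi> * u + \<phi> ((i,j),(r,s)) = \<pi> * g + of_nat r + of_int c' * \<pi> * of_nat s"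
            unfolding \<phi>_def g_def by (simp add: algebra_simps)
          then show ?thesis unfolding q_def Q_def cc by simp
        qed
        have "(\<Sum>(r,s)\<in>B. q (\<phi> ((i,j),(r,s)))) = (\<Sum>r<p. \<Sum>s<p. q (\<phi> ((i,j),(r,s))))"
          unfolding B_def atLeast0LessThan by (rule sum.cartesian_product[symmetric])
        also have "\<dots> = of_nat p * ee (Q (\<pi> * g))"
          unfolding qphi inner_sum[OF pp assms(4) c'0 na tt nt gi vi] unfolding Q_def cc ..
        finally show "(\<Sum>(r,s)\<in>B. q (\<phi> ((i,j),(r,s)))) = of_nat p * ee (Q (\<pi> * (u + of_int i + of_int j * omegaK D)))"
          unfolding g_def .
      qed
      also have "\<dots> = of_nat p * (\<Sum>(x,y)\<in>A. ee (Q (\<pi> * (u + of_int x + of_int y * omegaK D))))"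
        by (simp add: sum_distrib_left case_prod_beta)
      finally show ?thesis .
    qed
    show ?thesis unfolding L R step1 step2 unfolding A_def cc using p0 c'0
      by (simp add: field_simps)
  qed
qed


end
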